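(* On $\mathbb{R}^3$ with coordinates $(x,y,z)$ (the isometry group $E(1,1)$ of the flat Lorentzian plane, with its left-invariant structure), consider the Lorentzian metric $$g_1 = -dz^2 + (e^z dx + e^{-z} dy)^2 + (e^z dx - e^{-z} dy)^2 .$$ Let $F_1 = \tfrac12\big(e^{-z}\partial_x + e^{z}\partial_y\big)$, $F_2 = \tfrac12\big(e^{-z}\partial_x - e^{z}\partial_y\big)$, $F_3 = \partial_z$. For arbitrary real constants $a,b,c$ let $$X = 4a\Big(x e^z F_1 + x e^z F_2 - \tfrac12 F_3\Big) + 4(1-a)\Big(y e^{-z} F_1 - y e^{-z} F_2 + \tfrac12 F_3\Big) + b\,(e^z F_1 + e^z F_2) + c\,(e^{-z} F_1 - e^{-z} F_2).$$ Then $$2\,\mathrm{Ric}[g_1] + L_X g_1 - 4\,g_1 = 0 ,$$ and, for every choice of $a,b,c$, there is no smooth function $f$ on $\mathbb{R}^3$ with $X = \nabla f$ (gradient with respect to $g_1$). Hence $g_1$ is a shrinking non-gradient Lorentzian Ricci soliton.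
   Context: For a pseudo-Riemannian metric $g$ on a manifold $M$, a vector field $X$ and a constant $\alpha$, $(M,g,X,\alpha)$ is a Ricci soliton structure if $2\,\mathrm{Ric}[g] + L_X g + \alpha g = 0$, where $L_X$ denotes the Lie derivative. The soliton is called shrinking, steady, or expanding according as $\alpha<0$, $\alpha=0$, or $\alpha>0$. It is called gradient if $X=\nabla f$ for some function $f$, and non-gradient if $X\neq \nabla f$ for every function $f$. *)

theory Defs
  imports "HOL-Analysis.Analysis"
begin

text \<open>Tensor fields are given by their components in the coordinate frame
  (d/dx, d/dy, d/dz): a metric is a matrix-valued function, a vector field
  a vector-valued function.\<close>

type_synonym pt = "real ^ 3"
type_synonym metric = "pt \<Rightarrow> real ^ 3 ^ 3"
type_synonym vfield = "pt \<Rightarrow> real ^ 3"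

definition xc :: "pt \<Rightarrow> real" where "xc p = p $ 1"
definition yc :: "pt \<Rightarrow> real" where "yc p = p $ 2"
definition zc :: "pt \<Rightarrow> real" where "zc p = p $ 3"

definition pd :: "3 \<Rightarrow> (pt \<Rightarrow> real) \<Rightarrow> pt \<Rightarrow> real" where
  "pd i F p = deriv (\<lambda>t. F (p + t *\<^sub>R axis i 1)) 0"

fun iter_pd :: "3 list \<Rightarrow> (pt \<Rightarrow> real) \<Rightarrow> pt \<Rightarrow> real" where
  "iter_pd [] F = F"
| "iter_pd (i # is) F = pd i (iter_pd is F)"

definition smooth :: "(pt \<Rightarrow> real) \<Rightarrow> bool" where
  "smooth F \<longleftrightarrow> (\<forall>is p. iter_pd is F differentiable (at p))"

definition tsq :: "real ^ 3 \<Rightarrow> real ^ 3 ^ 3" where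
  "tsq w = (\<chi> i j. w $ i * w $ j)"

definition ginv :: "metric \<Rightarrow> pt \<Rightarrow> 3 \<Rightarrow> 3 \<Rightarrow> real" where
  "ginv g p i j = matrix_inv (g p) $ i $ j"

definition christoffel :: "metric \<Rightarrow> 3 \<Rightarrow> 3 \<Rightarrow> 3 \<Rightarrow> pt \<Rightarrow> real" where
  "christoffel g k i j p =
     (\<Sum>l\<in>UNIV. ginv g p k l *
        (pd i (\<lambda>q. g q $ l $ j) p + pd j (\<lambda>q. g q $ i $ l) p - pd l (\<lambda>q. g q $ i $ j) p)) / 2"

definition ricci :: "metric \<Rightarrow> pt \<Rightarrow> real ^ 3 ^ 3" where
  "ricci g p = (\<chi> i j.
     (\<Sum>k\<in>UNIV. pd k (christoffel g k i j) p - pd j (christoffel g k i k) p)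
   + (\<Sum>k\<in>UNIV. \<Sum>l\<in>UNIV. christoffel g k k l p * christoffel g l i j p
                          - christoffel g k j l p * christoffel g l i k p))"

definition lie_metric :: "vfield \<Rightarrow> metric \<Rightarrow> pt \<Rightarrow> real ^ 3 ^ 3" where
  "lie_metric X g p = (\<chi> i j. \<Sum>k\<in>UNIV.
       X p $ k * pd k (\<lambda>q. g q $ i $ j) p
     + g p $ k $ j * pd i (\<lambda>q. X q $ k) p
     + g p $ i $ k * pd j (\<lambda>q. X q $ k) p)"

definition grad :: "metric \<Rightarrow> (pt \<Rightarrow> real) \<Rightarrow> vfield" where
  "grad g f p = (\<chi> i. \<Sum>j\<in>UNIV. ginv g p i j * pd j f p)"

definition dx :: "real ^ 3" where "dx = axis 1 1"
definition dy :: "real ^ 3" where "dy = axis 2 1"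
definition dz :: "real ^ 3" where "dz = axis 3 1"

definition g1 :: metric where
  "g1 p = - tsq dz
          + tsq (exp (zc p) *\<^sub>R dx + exp (- zc p) *\<^sub>R dy)
          + tsq (exp (zc p) *\<^sub>R dx - exp (- zc p) *\<^sub>R dy)"

definition Dx :: "real ^ 3" where "Dx = axis 1 1"
definition Dy :: "real ^ 3" where "Dy = axis 2 1"
definition Dz :: "real ^ 3" where "Dz = axis 3 1"

definition F1 :: vfield where "F1 p = (1/2) *\<^sub>R (exp (- zc p) *\<^sub>R Dx + exp (zc p) *\<^sub>R Dy)"
definition F2 :: vfield where "F2 p = (1/2) *\<^sub>R (exp (- zc p) *\<^sub>R Dx - exp (zc p) *\<^sub>R Dy)"
definition F3 :: vfield where "F3 p = Dz"

definition Xfield :: "real \<Rightarrow> real \<Rightarrow> real \<Rightarrow> vfield" where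
  "Xfield a b c p =
       (4 * a) *\<^sub>R ((xc p * exp (zc p)) *\<^sub>R F1 p + (xc p * exp (zc p)) *\<^sub>R F2 p - (1/2) *\<^sub>R F3 p)
     + (4 * (1 - a)) *\<^sub>R ((yc p * exp (- zc p)) *\<^sub>R F1 p - (yc p * exp (- zc p)) *\<^sub>R F2 p + (1/2) *\<^sub>R F3 p)
     + b *\<^sub>R (exp (zc p) *\<^sub>R F1 p + exp (zc p) *\<^sub>R F2 p)
     + c *\<^sub>R (exp (- zc p) *\<^sub>R F1 p - exp (- zc p) *\<^sub>R F2 p)"

end

theory Submission
  imports Defs
begin

lemma matrix_inv_eq:
  fixes A B :: "real^3^3"
  assumes "A ** B = mat 1" "B ** A = mat 1"
  shows "matrix_inv A = B"
proof -
  have ex: "\<exists>A'. A ** A' = mat 1 \<and> A' ** A = mat 1" using assms by blast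
  define C where "C = matrix_inv A"
  have C: "A ** C = mat 1 \<and> C ** A = mat 1"
    unfolding C_def matrix_inv_def by (rule someI_ex[OF ex])
  have "C = C ** (A ** B)" using assms by (simp add: matrix_mul_rid)
  also have "\<dots> = (C ** A) ** B" by (simp add: matrix_mul_assoc)
  also have "\<dots> = B" using C by (simp add: matrix_mul_lid)
  finally show ?thesis unfolding C_def .
qed

definition gd :: "3 \<Rightarrow> real \<Rightarrow> real" where
  "gd i z = (if i = 1 then 2 * exp (2*z) else if i = 2 then 2 * exp (-(2*z)) else -1)"

lemma three_neq[simp]: "(1::3) \<noteq> 2" "(1::3) \<noteq> 3" "(2::3) \<noteq> 3" "(2::3) \<noteq> 1" "(3::3) \<noteq> 1" "(3::3) \<noteq> 2"
  by simp_all

lemma three_cases[case_names one two three]: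
  fixes i :: 3
  obtains "i = 1" | "i = 2" | "i = 3" using exhaust_3[of i] by blast

lemma g1_comp: "g1 p $ i $ j = (if i = j then gd i (zc p) else 0)"
  apply (cases i rule: three_cases; cases j rule: three_cases)
  apply (simp_all add: g1_def tsq_def dx_def dy_def dz_def axis_def gd_def)
  apply (simp_all add: algebra_simps flip: exp_add)
  done

lemma gd_nz: "gd i z \<noteq> 0" by (simp add: gd_def)

lemma ginv_comp: "ginv g1 p i j = (if i = j then 1 / gd i (zc p) else 0)"
proof -
  let ?D = "(\<chi> i j. if i = j then 1 / gd i (zc p) else 0) :: real^3^3"
  have 1: "g1 p ** ?D = mat 1" "?D ** g1 p = mat 1"
    by (simp_all add: vec_eq_iff matrix_matrix_mult_def mat_def g1_comp sum_3 forall_3 gd_nz)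
  show ?thesis unfolding ginv_def matrix_inv_eq[OF 1] by simp
qed

lemma pt_axis: "(p + t *\<^sub>R axis m 1) $ k = p $ k + t * (if k = m then 1 else 0)"
  by (simp add: axis_def)

lemma pd_exp:
  "pd m (\<lambda>q. A + B * exp (2 * zc q) + C * exp (-(2 * zc q))) p =
     (if m = 3 then 2 * B * exp (2 * zc p) - 2 * C * exp (-(2 * zc p)) else 0)"
proof -
  let ?s = "if (3::3) = m then 1 else (0::real)"
  have "((\<lambda>t. A + B * exp (2 * (p$3 + t * ?s)) + C * exp (-(2 * (p$3 + t * ?s)))) has_real_derivative
     (B * (exp (2 * (p$3 + 0 * ?s)) * (2 * ?s)) + C * (exp (-(2 * (p$3 + 0 * ?s))) * (-(2 * ?s))))) (at 0)"
    by (auto intro!: derivative_eq_intros)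
  then show ?thesis unfolding pd_def zc_def pt_axis
    by (auto dest!: DERIV_imp_deriv simp: algebra_simps split: if_splits)
qed

lemma pd_lin:
  "pd m (\<lambda>q. A * xc q + B * yc q + C) p = (if m = 1 then A else if m = 2 then B else 0)"
proof -
  let ?s = "\<lambda>k. if (k::3) = m then 1 else (0::real)"
  have "((\<lambda>t. A * (p$1 + t * ?s 1) + B * (p$2 + t * ?s 2) + C) has_real_derivative
     (A * ?s 1 + B * ?s 2)) (at 0)"
    by (auto intro!: derivative_eq_intros)
  then show ?thesis unfolding pd_def xc_def yc_def pt_axis
    by (auto dest!: DERIV_imp_deriv split: if_splits)
qed

definition "ga i j = (if i = j \<and> i = 3 then -1 else (0::real))"
definition "gb i j = (if i = j \<and> i = 1 then 2 else (0::real))"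
definition "gc i j = (if i = j \<and> i = 2 then 2 else (0::real))"

lemma g1_fun: "(\<lambda>q. g1 q $ i $ j) = (\<lambda>q. ga i j + gb i j * exp (2 * zc q) + gc i j * exp (-(2 * zc q)))"
  by (rule ext, cases i rule: three_cases; cases j rule: three_cases) (simp_all add: g1_comp gd_def ga_def gb_def gc_def)

definition "ca k i j = (if k = 1 \<and> (i = 1 \<and> j = 3 \<or> i = 3 \<and> j = 1) then 1
   else if k = 2 \<and> (i = 2 \<and> j = 3 \<or> i = 3 \<and> j = 2) then -1 else (0::real))"
definition "cb k i j = (if k = 3 \<and> i = 1 \<and> j = 1 then 2 else (0::real))"
definition "cc k i j = (if k = 3 \<and> i = 2 \<and> j = 2 then -2 else (0::real))"

lemma chr_fun: "christoffel g1 k i j = (\<lambda>q. ca k i j + cb k i j * exp (2 * zc q) + cc k i j * exp (-(2 * zc q)))"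
  apply (rule ext)
  apply (simp only: christoffel_def g1_fun pd_exp ginv_comp sum_3)
  apply (cases k rule: three_cases; cases i rule: three_cases; cases j rule: three_cases)
  apply (simp_all add: gd_def ga_def gb_def gc_def ca_def cb_def cc_def field_simps exp_minus)
  done

definition "XA a k = (if k = 1 then 4 * a else (0::real))"
definition "XB a k = (if k = 2 then 4 * (1 - a) else (0::real))"
definition "XC a b c k = (if k = 1 then b else if k = 2 then c else 2 - 4 * (a::real))"

lemma X_comp: "Xfield a b c q $ k = XA a k * xc q + XB a k * yc q + XC a b c k"
  apply (cases k rule: three_cases)
  apply (simp_all add: Xfield_def F1_def F2_def F3_def Dx_def Dy_def Dz_def axis_def XA_def XB_def XC_def)
  apply (simp_all add: algebra_simps flip: exp_add)
  apply (simp add: field_simps)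
  done

lemma X_fun: "(\<lambda>q. Xfield a b c q $ k) = (\<lambda>q. XA a k * xc q + XB a k * yc q + XC a b c k)"
  by (rule ext, rule X_comp)

lemma soliton: "2 *\<^sub>R ricci g1 p + lie_metric (Xfield a b c) g1 p - 4 *\<^sub>R g1 p = 0"
  apply (simp only: vec_eq_iff forall_3 ricci_def lie_metric_def chr_fun pd_exp g1_fun X_fun pd_lin)
  apply (simp add: sum_3 g1_comp X_comp)
  apply (simp add: gd_def ga_def gb_def gc_def ca_def cb_def cc_def XA_def XB_def XC_def field_simps exp_minus)
  done

lemma line_deriv_gen:
  fixes f :: "pt \<Rightarrow> real"
  assumes "(f has_derivative f') (at (p + t *\<^sub>R v))"
  shows "((\<lambda>s. f (p + s *\<^sub>R v)) has_real_derivative f' v) (at t)"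
proof -
  have lin: "linear f'" using assms has_derivative_linear by blast
  have "((\<lambda>s. p + s *\<^sub>R v) has_derivative (\<lambda>h. h *\<^sub>R v)) (at t)"
    by (auto intro!: derivative_eq_intros)
  from has_derivative_compose[OF this assms]
  have "((\<lambda>s. f (p + s *\<^sub>R v)) has_derivative (\<lambda>h. f' (h *\<^sub>R v))) (at t)" by (simp add: o_def)
  moreover have "(\<lambda>h. f' (h *\<^sub>R v)) = (*) (f' v)"
    using linear_scale[OF lin] by (auto simp: mult.commute)
  ultimately show ?thesis unfolding has_field_derivative_def by simp
qed

lemma line_deriv:
  fixes f :: "pt \<Rightarrow> real"
  assumes "\<And>q. f differentiable (at q)"
  shows "((\<lambda>s. f (p + s *\<^sub>R axis m 1)) has_real_derivative pd m f (p + t *\<^sub>R axis m 1)) (at t)"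
proof -
  obtain f' where d: "(f has_derivative f') (at (p + t *\<^sub>R axis m 1))"
    using assms unfolding differentiable_def by blast
  have 1: "((\<lambda>s. f (p + s *\<^sub>R axis m 1)) has_real_derivative f' (axis m 1)) (at t)"
    by (rule line_deriv_gen[OF d])
  have 2: "((\<lambda>s. f ((p + t *\<^sub>R axis m 1) + s *\<^sub>R axis m 1)) has_real_derivative f' (axis m 1)) (at 0)"
    by (rule line_deriv_gen) (use d in simp)
  have "pd m f (p + t *\<^sub>R axis m 1) = f' (axis m 1)"
    unfolding pd_def by (rule DERIV_imp_deriv[OF 2])
  with 1 show ?thesis by simp
qed

lemma nongrad: "\<not> (\<exists>f. smooth f \<and> (\<forall>p. Xfield a b c p = grad g1 f p))"
proof
  assume "\<exists>f. smooth f \<and> (\<forall>p. Xfield a b c p = grad g1 f p)"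
  then obtain f where sm: "smooth f" and X: "\<And>p. Xfield a b c p = grad g1 f p" by blast
  have dif: "\<And>q. f differentiable (at q)" using sm unfolding smooth_def
    by (metis iter_pd.simps(1))
  have pdf: "pd i f q = gd i (zc q) * (XA a i * xc q + XB a i * yc q + XC a b c i)" for i q
  proof -
    have "Xfield a b c q $ i = grad g1 f q $ i" using X by simp
    then have "XA a i * xc q + XB a i * yc q + XC a b c i = pd i f q / gd i (zc q)"
      unfolding X_comp grad_def
      by (cases i rule: three_cases) (simp_all add: sum_3 ginv_comp)
    then show ?thesis using gd_nz[of i "zc q"] by (simp add: field_simps)
  qed
  define k where "k = 4 * a - 2"
  have pd3: "pd 3 f q = k" for q unfolding pdf by (simp add: gd_def XA_def XB_def XC_def k_def)
  have line3: "f (p + t *\<^sub>R axis 3 1) = f p + k * t" for p t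
  proof -
    have "\<forall>s. ((\<lambda>s. f (p + s *\<^sub>R axis 3 1) - k * s) has_real_derivative 0) (at s)"
    proof
      fix s
      show "((\<lambda>s. f (p + s *\<^sub>R axis 3 1) - k * s) has_real_derivative 0) (at s)"
        using line_deriv[OF dif, of p 3 s] pd3
        by (auto intro!: derivative_eq_intros)
    qed
    from DERIV_isconst_all[OF this, of t 0] show ?thesis by simp
  qed
  have shift: "pd i f (p + t *\<^sub>R axis 3 1) = pd i f p" for i p t
  proof -
    have "((\<lambda>s. f (p + s *\<^sub>R axis i 1) + k * t) has_real_derivative pd i f p) (at 0)"
      using line_deriv[OF dif, of p i 0] by (auto intro!: derivative_eq_intros)
    moreover have "(\<lambda>s. f ((p + t *\<^sub>R axis 3 1) + s *\<^sub>R axis i 1)) = (\<lambda>s. f (p + s *\<^sub>R axis i 1) + k * t)"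
    proof
      fix s
      have "(p + t *\<^sub>R axis 3 1) + s *\<^sub>R axis i 1 = (p + s *\<^sub>R axis i 1) + t *\<^sub>R axis 3 1"
        by (simp add: algebra_simps)
      then show "f ((p + t *\<^sub>R axis 3 1) + s *\<^sub>R axis i 1) = f (p + s *\<^sub>R axis i 1) + k * t"
        by (simp only: line3)
    qed
    ultimately show ?thesis unfolding pd_def[of i f "p + t *\<^sub>R axis 3 1"] pd_def[of i f p]
      by (simp add: DERIV_imp_deriv line_deriv[OF dif, of p i 0, simplified])
  qed
  define P where "P x y = x *\<^sub>R axis 1 1 + y *\<^sub>R (axis 2 1 :: pt)" for x y
  have Pz: "zc (P x y + t *\<^sub>R axis 3 1) = t" "xc (P x y + t *\<^sub>R axis 3 1) = x"
     "yc (P x y + t *\<^sub>R axis 3 1) = y" for x y t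
    by (simp_all add: P_def zc_def xc_def yc_def axis_def)
  have Pz0: "zc (P x y) = 0" "xc (P x y) = x" "yc (P x y) = y" for x y
    using Pz[of x y 0] by simp_all
  have e1: "exp (2::real) \<noteq> 1" and e2: "exp (-2::real) \<noteq> 1" by simp_all
  have r1: "4 * a * x + b = 0" for x
  proof -
    have "exp 2 * (4 * a * x + b) = 1 * (4 * a * x + b)"
      using shift[of 1 "P x 0" 1] unfolding pdf Pz Pz0 by (simp add: gd_def XA_def XB_def XC_def algebra_simps)
    then show ?thesis using e1 by (metis mult_cancel_right)
  qed
  have r2: "4 * (1 - a) * y + c = 0" for y
  proof -
    have "exp (-2) * (4 * (1 - a) * y + c) = 1 * (4 * (1 - a) * y + c)"
      using shift[of 2 "P 0 y" 1] unfolding pdf Pz Pz0 by (simp add: gd_def XA_def XB_def XC_def algebra_simps)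
    then show ?thesis using e2 by (metis mult_cancel_right)
  qed
  from r1[of 0] r1[of 1] r2[of 0] r2[of 1] show False by simp
qed

theorem theorem5p1:
  fixes a b c :: real
  shows "(\<forall>p. 2 *\<^sub>R ricci g1 p + lie_metric (Xfield a b c) g1 p - 4 *\<^sub>R g1 p = 0)
       \<and> \<not> (\<exists>f. smooth f \<and> (\<forall>p. Xfield a b c p = grad g1 f p))"
  using soliton nongrad by blast

end
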